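(* For all real numbers $a,b,c>0$, \[ \frac{(ab+ac+bc)^{2}}{\sqrt{a^{2}+b^{2}+c^{2}}\,\sqrt{a^{2}+b^{2}+c^{2}+3ab+3bc+3ca}} \leq \frac{a^{2}b}{\sqrt{b^{2}+3ac}} + \frac{b^{2}c}{\sqrt{c^{2}+3ab}} + \frac{c^{2}a}{\sqrt{a^{2}+3bc}}. \] *)

theory Defs
  imports Complex_Main
begin

end

theory Submission
  imports Defs
begin

lemma titu3:
  fixes u1 u2 u3 w1 w2 w3 :: real
  assumes "w1 > 0" "w2 > 0" "w3 > 0"
  shows "(u1+u2+u3)^2/(w1+w2+w3) \<le> u1^2/w1 + u2^2/w2 + u3^2/w3"
proof -
  define t1 where "t1 = u1/w1"
  define t2 where "t2 = u2/w2"
  define t3 where "t3 = u3/w3"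
  have u1: "u1 = t1*w1" using assms t1_def by simp
  have u2: "u2 = t2*w2" using assms t2_def by simp
  have u3: "u3 = t3*w3" using assms t3_def by simp
  have r: "u1^2/w1 + u2^2/w2 + u3^2/w3 = t1^2*w1 + t2^2*w2 + t3^2*w3"
    using assms unfolding u1 u2 u3 by (simp add: power2_eq_square)
  have id: "(t1^2*w1 + t2^2*w2 + t3^2*w3)*(w1+w2+w3) - (t1*w1+t2*w2+t3*w3)^2
     = w1*w2*(t1-t2)^2 + w1*w3*(t1-t3)^2 + w2*w3*(t2-t3)^2"
    by (simp add: power2_eq_square algebra_simps)
  have "0 \<le> w1*w2*(t1-t2)^2 + w1*w3*(t1-t3)^2 + w2*w3*(t2-t3)^2"
    using assms by (intro add_nonneg_nonneg mult_nonneg_nonneg) auto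
  hence "(t1*w1+t2*w2+t3*w3)^2 \<le> (t1^2*w1 + t2^2*w2 + t3^2*w3)*(w1+w2+w3)"
    using id by linarith
  hence "(t1*w1+t2*w2+t3*w3)^2/(w1+w2+w3) \<le> t1^2*w1 + t2^2*w2 + t3^2*w3"
    using assms by (simp add: divide_le_eq)
  thus ?thesis using r u1 u2 u3 by simp
qed

theorem mainTheorem10:
  fixes a b c :: real
  assumes "a > 0" and "b > 0" and "c > 0"
  shows "(a*b + a*c + b*c)^2 / (sqrt (a^2 + b^2 + c^2) * sqrt (a^2 + b^2 + c^2 + 3*a*b + 3*b*c + 3*c*a))
    \<le> a^2*b / sqrt (b^2 + 3*a*c) + b^2*c / sqrt (c^2 + 3*a*b) + c^2*a / sqrt (a^2 + 3*b*c)"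
proof -
  define x where "x = sqrt (b^2 + 3*a*c)"
  define y where "y = sqrt (c^2 + 3*a*b)"
  define z where "z = sqrt (a^2 + 3*b*c)"
  have xp: "x > 0" unfolding x_def using assms by (intro real_sqrt_gt_zero) (simp add: add_pos_pos)
  have yp: "y > 0" unfolding y_def using assms by (intro real_sqrt_gt_zero) (simp add: add_pos_pos)
  have zp: "z > 0" unfolding z_def using assms by (intro real_sqrt_gt_zero) (simp add: add_pos_pos)
  have x2: "x^2 = b^2 + 3*a*c" unfolding x_def using assms by simp
  have y2: "y^2 = c^2 + 3*a*b" unfolding y_def using assms by simp
  have z2: "z^2 = a^2 + 3*b*c" unfolding z_def using assms by simp
  define S where "S = a^2 + b^2 + c^2"
  define T where "T = a^2 + b^2 + c^2 + 3*a*b + 3*b*c + 3*c*a"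
  define W where "W = b*x + c*y + a*z"
  have Wp: "W > 0" unfolding W_def using assms xp yp zp by (simp add: add_pos_pos)
  have T: "T = x^2+y^2+z^2" unfolding T_def x2 y2 z2 by simp
  have id: "S*T - W^2 = (b*y - c*x)^2 + (b*z - a*x)^2 + (c*z - a*y)^2"
    unfolding T S_def W_def by (simp add: power2_eq_square algebra_simps)
  have "W^2 \<le> S*T" using id
    by (smt (verit) zero_le_power2)
  hence "W \<le> sqrt (S*T)" using Wp by (simp add: real_le_rsqrt)
  hence Wle: "W \<le> sqrt S * sqrt T" by (simp add: real_sqrt_mult)
  have "(a*b + a*c + b*c)^2 / (sqrt S * sqrt T) \<le> (a*b + a*c + b*c)^2 / W"
    using Wle Wp by (intro divide_left_mono) auto
  also have "(a*b + a*c + b*c)^2 / W = (a*b + b*c + c*a)^2/(b*x + c*y + a*z)"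
    unfolding W_def by (simp add: algebra_simps)
  also have "\<dots> \<le> (a*b)^2/(b*x) + (b*c)^2/(c*y) + (c*a)^2/(a*z)"
    using assms xp yp zp by (intro titu3) auto
  also have "\<dots> = a^2*b/x + b^2*c/y + c^2*a/z"
    using assms by (simp add: power2_eq_square)
  finally show ?thesis unfolding x_def y_def z_def S_def T_def .
qed

end
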